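(* Let $D$ be a strict, asymmetric digraph of order $n$. Then the number $c(L(D))$ of connected components of $L(D)$ satisfies $c(L(D))\le f(n)$, where $f(n)=\frac{n^2-1}{4}$ if $n$ is odd and $f(n)=\frac{n^2}{4}$ if $n$ is even. Moreover, equality holds if and only if either $D$ is the transitive tournament of order $3$, or there is a partition $V(D)=X\cup Y$ with $\big||X|-|Y|\big|\le 1$ such that $A(D)=\{(x,y): x\in X,\ y\in Y\}$ (i.e. $D$ is the orientation of the balanced complete bipartite graph on $X,Y$ with all arcs directed from $X$ to $Y$).
   Context: A digraph is strict if it has no loops and no parallel arcs, and asymmetric if $(u,v)\in A(D)$ implies $(v,u)\notin A(D)$. For a digraph $D$, the line graph $L(D)$ is the graph with vertex set $A(D)$ in which two distinct arcs are adjacent if and only if the head of one is the tail of the other. A tournament is an orientation of a complete graph; it is transitive if it has no directed cycle. *)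

theory Defs
  imports Main
begin

text \<open>A digraph is given by a finite vertex set V and an arc set A \<subseteq> V \<times> V
  (a set of ordered pairs, hence no parallel arcs).\<close>

definition digraph :: "'a set \<Rightarrow> ('a \<times> 'a) set \<Rightarrow> bool" where
  "digraph V A \<longleftrightarrow> finite V \<and> A \<subseteq> V \<times> V"

definition strict_digraph :: "'a set \<Rightarrow> ('a \<times> 'a) set \<Rightarrow> bool" where
  "strict_digraph V A \<longleftrightarrow> digraph V A \<and> (\<forall>v. (v, v) \<notin> A)"

definition asymmetric :: "('a \<times> 'a) set \<Rightarrow> bool" where
  "asymmetric A \<longleftrightarrow> (\<forall>u v. (u, v) \<in> A \<longrightarrow> (v, u) \<notin> A)"

definition line_adj :: "('a \<times> 'a) set \<Rightarrow> ('a \<times> 'a) rel" where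
  "line_adj A = {(e, f). e \<in> A \<and> f \<in> A \<and> e \<noteq> f \<and> (snd e = fst f \<or> snd f = fst e)}"

definition num_components_line :: "('a \<times> 'a) set \<Rightarrow> nat" where
  "num_components_line A = card (A // ((line_adj A)\<^sup>*))"

definition f_bound :: "nat \<Rightarrow> nat" where
  "f_bound n = (if odd n then (n^2 - 1) div 4 else n^2 div 4)"

definition tournament :: "'a set \<Rightarrow> ('a \<times> 'a) set \<Rightarrow> bool" where
  "tournament V A \<longleftrightarrow> digraph V A \<and> (\<forall>v. (v, v) \<notin> A) \<and>
     (\<forall>u\<in>V. \<forall>v\<in>V. u \<noteq> v \<longrightarrow> ((u, v) \<in> A \<longleftrightarrow> (v, u) \<notin> A))"

definition transitive_tournament :: "'a set \<Rightarrow> ('a \<times> 'a) set \<Rightarrow> bool" where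
  "transitive_tournament V A \<longleftrightarrow> tournament V A \<and> acyclic A"

end

theory Submission
  imports Defs
begin


abbreviation RS :: "('a \<times> 'a) set \<Rightarrow> (('a \<times> 'a) \<times> ('a \<times> 'a)) set" where
  "RS A \<equiv> (line_adj A)\<^sup>*"

lemma quot_img: "A // r = (\<lambda>a. r``{a}) ` A" by (auto simp: quotient_def)

lemma line_adj_sym: "sym (line_adj A)" unfolding line_adj_def sym_def by auto

lemma RS_sym: "(e,f) \<in> RS A \<Longrightarrow> (f,e) \<in> RS A"
  using sym_rtrancl[OF line_adj_sym] unfolding sym_def by blast

lemma RS_trans: "(e,f) \<in> RS A \<Longrightarrow> (f,g) \<in> RS A \<Longrightarrow> (e,g) \<in> RS A"
  by (rule rtrancl_trans)

lemma RS_class_eq: assumes "(a,b) \<in> RS A" shows "RS A``{a} = RS A``{b}"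
proof (intro equalityI subsetI)
  fix x assume "x \<in> RS A``{a}"
  then show "x \<in> RS A``{b}" using RS_trans[OF RS_sym[OF assms]] by blast
next
  fix x assume "x \<in> RS A``{b}"
  then show "x \<in> RS A``{a}" using RS_trans[OF assms] by blast
qed

lemma RS_in: "(e,f) \<in> RS A \<Longrightarrow> e \<in> A \<Longrightarrow> f \<in> A"
  by (induct rule: rtrancl_induct) (auto simp: line_adj_def)

definition transit :: "('a \<times> 'a) set \<Rightarrow> 'a \<Rightarrow> bool" where
  "transit A v \<longleftrightarrow> (\<exists>x. (x,v)\<in>A) \<and> (\<exists>y. (v,y)\<in>A)"
definition srcs :: "('a \<times> 'a) set \<Rightarrow> 'a set" where
  "srcs A = {v. (\<exists>y. (v,y)\<in>A) \<and> \<not>(\<exists>x. (x,v)\<in>A)}"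
definition snks :: "('a \<times> 'a) set \<Rightarrow> 'a set" where
  "snks A = {v. (\<exists>x. (x,v)\<in>A) \<and> \<not>(\<exists>y. (v,y)\<in>A)}"
definition trs :: "('a \<times> 'a) set \<Rightarrow> 'a set" where
  "trs A = {v. transit A v}"
definition TC :: "('a \<times> 'a) set \<Rightarrow> ('a \<times> 'a) set \<Rightarrow> 'a set" where
  "TC A C = {v \<in> trs A. \<exists>e\<in>C. fst e = v \<or> snd e = v}"

lemma transit_rel:
  assumes noloop: "\<forall>v. (v,v)\<notin>A" and tr: "transit A v"
    and e: "e\<in>A" "fst e = v \<or> snd e = v" and f: "f\<in>A" "fst f = v \<or> snd f = v"
  shows "(e,f) \<in> RS A"
proof -
  obtain x y where xv: "(x,v)\<in>A" and vy: "(v,y)\<in>A" using tr unfolding transit_def by blast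
  have key: "(g,(v,y)) \<in> RS A" if "g\<in>A" "fst g = v \<or> snd g = v" for g
  proof (cases "g = (v,y)")
    case True then show ?thesis by simp
  next
    case False
    show ?thesis
    proof (cases "snd g = v")
      case True
      then have "(g,(v,y)) \<in> line_adj A" using False that vy unfolding line_adj_def by auto
      then show ?thesis by blast
    next
      case False2: False
      with that have fg: "fst g = v" by auto
      have "(g,(x,v)) \<in> line_adj A" using that xv fg False2 noloop unfolding line_adj_def by (cases g) auto
      moreover have "((x,v),(v,y)) \<in> line_adj A" using xv vy noloop unfolding line_adj_def by auto
      ultimately show ?thesis by (meson r_into_rtrancl rtrancl_trans)
    qed
  qed
  show ?thesis using rtrancl_trans[OF key[OF e] RS_sym[OF key[OF f]]] .
qed

lemma count_bound:
  assumes sd: "strict_digraph V A"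
  shows "num_components_line A \<le> card (A \<inter> (srcs A \<times> snks A)) + card (trs A)"
    and "srcs A = {} \<or> snks A = {} \<Longrightarrow> 2 * num_components_line A \<le> card (trs A)"
proof -
  have finV: "finite V" and sub: "A \<subseteq> V \<times> V" and noloop: "\<forall>v. (v,v)\<notin>A"
    using sd unfolding strict_digraph_def digraph_def by auto
  have finA: "finite A" using finV sub finite_subset by blast
  have trsV: "trs A \<subseteq> V" using sub unfolding trs_def transit_def by auto
  have fint: "finite (trs A)" using trsV finV finite_subset by blast
  define K where "K = A // RS A"
  have K: "K = (\<lambda>a. RS A``{a}) ` A" unfolding K_def by (rule quot_img)
  have finK: "finite K" using K finA by simp
  define S1 where "S1 = (\<lambda>a. RS A``{a}) ` (A \<inter> (srcs A \<times> snks A))"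
  define S2 where "S2 = K - S1"
  have finS2: "finite S2" using finK S2_def by simp
  have cK: "num_components_line A = card K" unfolding num_components_line_def K_def by simp
  have "card K \<le> card (S1 \<union> S2)" by (rule card_mono) (use finK finA S2_def S1_def in auto)
  also have "\<dots> \<le> card S1 + card S2" by (rule card_Un_le)
  finally have cK2: "card K \<le> card S1 + card S2" .
  have cS1: "card S1 \<le> card (A \<inter> (srcs A \<times> snks A))" unfolding S1_def by (rule card_image_le) (use finA in simp)
  have inC: "e \<in> A" if "C \<in> K" "e \<in> C" for C e
    using that RS_in unfolding K by blast
  have finTC: "finite (TC A C)" for C using fint unfolding TC_def by simp
  have TCsub: "TC A C \<subseteq> trs A" for C unfolding TC_def by auto
  have disj: "TC A C \<inter> TC A C' = {}" if CK: "C \<in> K" "C' \<in> K" "C \<noteq> C'" for C C'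
  proof (rule ccontr)
    assume "TC A C \<inter> TC A C' \<noteq> {}"
    then obtain v e e' where v: "transit A v" and e: "e \<in> C" "fst e = v \<or> snd e = v"
      and e': "e' \<in> C'" "fst e' = v \<or> snd e' = v"
      unfolding TC_def trs_def by blast
    obtain a where a: "a \<in> A" "C = RS A``{a}" using CK K by blast
    obtain a' where a': "a' \<in> A" "C' = RS A``{a'}" using CK K by blast
    have "(e,e') \<in> RS A" using transit_rel[OF noloop v] e e' inC CK by blast
    moreover have "(a,e) \<in> RS A" "(a',e') \<in> RS A" using a a' e e' by auto
    ultimately have "(a,a') \<in> RS A" by (meson RS_sym RS_trans)
    then have "C = C'" using a a' RS_class_eq by metis
    with CK show False by simp
  qed
  have sumeq: "card (\<Union>(TC A ` S2)) = (\<Sum>C\<in>S2. card (TC A C))"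
    by (rule card_UN_disjoint) (use finS2 finTC disj S2_def in auto)
  have "card (\<Union>(TC A ` S2)) \<le> card (trs A)" by (rule card_mono) (use fint TCsub in auto)
  with sumeq have sumle: "(\<Sum>C\<in>S2. card (TC A C)) \<le> card (trs A)" by simp
  have S2ne: "TC A C \<noteq> {}" if CS: "C \<in> S2" for C
  proof -
    obtain a where a: "a \<in> A" "C = RS A``{a}" using CS K S2_def by blast
    have aS: "a \<notin> srcs A \<times> snks A" using CS a S2_def S1_def by auto
    obtain u w where uw: "a = (u,w)" by (cases a)
    have aC: "a \<in> C" using a by simp
    show ?thesis
    proof (cases "u \<in> srcs A")
      case True
      then have "w \<notin> snks A" using aS uw by auto
      then have "transit A w" using a uw unfolding snks_def transit_def by auto
      then have "w \<in> TC A C" using aC uw unfolding TC_def trs_def by force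
      then show ?thesis by blast
    next
      case False
      then have "transit A u" using a uw unfolding srcs_def transit_def by auto
      then have "u \<in> TC A C" using aC uw unfolding TC_def trs_def by force
      then show ?thesis by blast
    qed
  qed
  have "of_nat (card S2) * (1::nat) \<le> (\<Sum>C\<in>S2. card (TC A C))"
    by (rule sum_bounded_below) (use S2ne finTC in \<open>auto simp: Suc_le_eq card_gt_0_iff\<close>)
  with sumle have "card S2 \<le> card (trs A)" by simp
  then show "num_components_line A \<le> card (A \<inter> (srcs A \<times> snks A)) + card (trs A)"
    using cK cK2 cS1 by linarith
  assume deg: "srcs A = {} \<or> snks A = {}"
  then have S1e: "S1 = {}" unfolding S1_def by auto
  have two: "2 \<le> card (TC A C)" if CS: "C \<in> S2" for C
  proof -
    obtain a where a: "a \<in> A" "C = RS A``{a}" using CS K S2_def by blast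
    obtain v where vT: "v \<in> TC A C" using S2ne[OF CS] by blast
    then obtain e where v: "transit A v" and e: "e \<in> C" "fst e = v \<or> snd e = v"
      unfolding TC_def trs_def by blast
    have eA: "e \<in> A" using e a inC CS S2_def by blast
    have ae: "(a,e) \<in> RS A" using a e by auto
    obtain x y where xv: "(x,v)\<in>A" and vy: "(v,y)\<in>A" using v unfolding transit_def by blast
    have "\<exists>z. z \<noteq> v \<and> z \<in> TC A C"
    proof (cases "srcs A = {}")
      case True
      then have "transit A x" using xv unfolding srcs_def transit_def by auto
      moreover have "(e,(x,v)) \<in> RS A" using transit_rel[OF noloop v eA e(2)] xv by simp
      then have "(x,v) \<in> C" using a ae RS_trans by fastforce
      ultimately have "x \<in> TC A C" unfolding TC_def trs_def by force
      moreover have "x \<noteq> v" using xv noloop by auto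
      ultimately show ?thesis by blast
    next
      case False
      then have sn: "snks A = {}" using deg by simp
      then have "transit A y" using vy unfolding snks_def transit_def by auto
      moreover have "(e,(v,y)) \<in> RS A" using transit_rel[OF noloop v eA e(2)] vy by simp
      then have "(v,y) \<in> C" using a ae RS_trans by fastforce
      ultimately have "y \<in> TC A C" unfolding TC_def trs_def by force
      moreover have "y \<noteq> v" using vy noloop by auto
      ultimately show ?thesis by blast
    qed
    then obtain z where z: "z \<noteq> v" "z \<in> TC A C" by blast
    have "card {z,v} \<le> card (TC A C)" by (rule card_mono) (use finTC z vT in auto)
    then show ?thesis using z by simp
  qed
  have "of_nat (card S2) * (2::nat) \<le> (\<Sum>C\<in>S2. card (TC A C))"
    by (rule sum_bounded_below) (use two in auto)
  with sumle cK cK2 S1e show "2 * num_components_line A \<le> card (trs A)" by simp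
qed



lemma fb: "4 * f_bound n \<le> n^2" "n^2 \<le> 4 * f_bound n + 1"
proof -
  have "4 * f_bound n \<le> n^2 \<and> n^2 \<le> 4 * f_bound n + 1"
  proof (cases "even n")
    case True
    then obtain k where n: "n = 2*k" by (rule evenE)
    have "n^2 = 4*k^2" using n by (simp add: power_mult_distrib)
    then show ?thesis using True unfolding f_bound_def by simp
  next
    case False
    then obtain k where n: "n = 2*k+1" by (rule oddE)
    have e: "n^2 = 4*(k^2+k) + 1" using n by (simp add: power2_eq_square algebra_simps)
    then have "n^2 - 1 = 4*(k^2+k)" by simp
    then show ?thesis using False e unfolding f_bound_def by simp
  qed
  then show "4 * f_bound n \<le> n^2" "n^2 \<le> 4 * f_bound n + 1" by auto
qed

lemma ar_sq: "4*p*q \<le> ((p::nat)+q)^2"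
proof -
  have "(int p + int q)^2 - 4*int p*int q = (int p - int q)^2"
    by (simp add: power2_eq_square algebra_simps)
  moreover have "0 \<le> (int p - int q)^2" by simp
  ultimately have h: "4*int p*int q \<le> (int p + int q)^2" by linarith
  have "int (4*p*q) \<le> int ((p+q)^2)" using h by simp
  then show ?thesis by (simp only: of_nat_le_iff)
qed

lemma ar_t0:
  assumes "p+q \<le> (n::nat)" "n^2 \<le> 4*p*q + 1"
  shows "(p+q = n \<and> p \<le> q+1 \<and> q \<le> p+1) \<or> n \<le> 1"
proof (cases "p+q = n")
  case True
  have "(int p + int q)^2 - 4*int p*int q = (int p - int q)^2"
    by (simp add: power2_eq_square algebra_simps)
  moreover have "(p+q)^2 \<le> 4*p*q+1" using assms True by simp
  then have "int ((p+q)^2) \<le> int (4*p*q+1)" by (simp only: of_nat_le_iff)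
  then have "(int p + int q)^2 \<le> 4*int p*int q+1" by simp
  ultimately have "(int p - int q)^2 \<le> 1" by linarith
  then have "\<bar>int p - int q\<bar> \<le> 1" using abs_square_le_1 by blast
  then show ?thesis using True by linarith
next
  case False
  then have "p+q+1 \<le> n" using assms by simp
  then have "(p+q+1)^2 \<le> n^2" by (rule power_mono) simp
  moreover have "(p+q+1)^2 = (p+q)^2 + 2*(p+q) + 1" by (simp add: power2_eq_square algebra_simps)
  ultimately have "2*(p+q) \<le> 0" using assms ar_sq[of p q] by linarith
  then have "p = 0" "q = 0" by auto
  then have "n^2 \<le> 1" using assms by simp
  have "n \<le> 1"
  proof (rule ccontr)
    assume "\<not> n \<le> 1" then have "2 \<le> n" by simp
    then have "2*2 \<le> n*n" using \<open>2 \<le> n\<close> by (rule mult_le_mono)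
    then show False using \<open>n^2 \<le> 1\<close> by (simp add: power2_eq_square)
  qed
  then show ?thesis by simp
qed

lemma ar_mix:
  assumes p: "p \<ge> 1" and q: "q \<ge> 1" and t: "t \<ge> (1::nat)" and n: "p+q+t \<le> n" and c: "c \<le> p*q + t"
  shows "4*c+1 \<le> n^2" "n^2 \<le> 4*c+1 \<Longrightarrow> n=3 \<and> t=1 \<and> p=1 \<and> q=1"
proof -
  define m where "m = p+q"
  have m2: "m \<ge> 2" using p q m_def by simp
  have sq: "4*p*q \<le> m^2" unfolding m_def by (rule ar_sq)
  have c4: "4*c \<le> m^2 + 4*t" using c sq by simp
  have mtn: "m+t \<le> n" using n m_def by simp
  have pw: "(m+t)^2 \<le> n^2" using mtn by (rule power_mono) simp
  have ex: "(m+t)^2 = m^2 + 2*m*t + t*t" by (simp add: power2_eq_square algebra_simps)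
  have mt: "2*2*t \<le> 2*m*t" using m2 by simp
  have tt: "t*1 \<le> t*t" using t by (rule mult_le_mono2)
  from pw ex have A1: "m^2 + 2*m*t + t*t \<le> n^2" by simp
  show "4*c+1 \<le> n^2" using A1 c4 mt tt t by linarith
  assume le: "n^2 \<le> 4*c+1"
  have chain: "m^2 + 2*m*t + t*t \<le> m^2 + 4*t + 1"
    using A1 le c4 by linarith
  have "t*t \<le> 1" using chain mt by linarith
  then have t1: "t = 1" using t tt by linarith
  then have "2*m \<le> 4" using chain by simp
  then have m2': "m = 2" using m2 by simp
  then have pq: "p = 1" "q = 1" using p q m_def by auto
  have "n^2 \<le> 9" using le c pq t1 by simp
  moreover have "n \<ge> 3" using n pq t1 by simp
  moreover have "n \<ge> 4 \<Longrightarrow> n^2 \<ge> 16"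
  proof -
    assume "n \<ge> 4" then have "4^2 \<le> n^2" by (rule power_mono) simp
    then show ?thesis by simp
  qed
  ultimately have "n = 3" by linarith
  then show "n=3 \<and> t=1 \<and> p=1 \<and> q=1" using t1 pq by simp
qed

lemma ar_deg:
  assumes "2*c \<le> t" "t \<le> n" "3 \<le> (n::nat)"
  shows "4*c + 3 \<le> n^2"
proof -
  have "3*n \<le> n*n" using assms(3) by (rule mult_le_mono1)
  then show ?thesis unfolding power2_eq_square using assms by linarith
qed

lemma bip_arith:
  assumes "x \<le> y+1" "y \<le> x+(1::nat)"
  shows "x*y = f_bound (x+y)"
proof -
  have "x = y \<or> x = y+1 \<or> y = x+1" using assms by linarith
  then show ?thesis
  proof (elim disjE)
    assume "x = y"
    then have "(x+y)^2 = 4*(x*y)" by (simp add: power2_eq_square algebra_simps)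
    then show ?thesis using \<open>x = y\<close> unfolding f_bound_def by simp
  next
    assume h: "x = y+1"
    then have "(x+y)^2 = 4*(x*y) + 1" by (simp add: power2_eq_square algebra_simps)
    moreover have "odd (x+y)" using h by simp
    ultimately show ?thesis unfolding f_bound_def by simp
  next
    assume h: "y = x+1"
    then have "(x+y)^2 = 4*(x*y) + 1" by (simp add: power2_eq_square algebra_simps)
    moreover have "odd (x+y)" using h by simp
    ultimately show ?thesis unfolding f_bound_def by simp
  qed
qed



lemma parts:
  assumes sd: "strict_digraph V A"
  shows "srcs A \<subseteq> V" "snks A \<subseteq> V" "trs A \<subseteq> V"
    "card (srcs A) + card (snks A) + card (trs A) \<le> card V"
proof -
  have finV: "finite V" and sub: "A \<subseteq> V \<times> V"
    using sd unfolding strict_digraph_def digraph_def by auto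
  show s1: "srcs A \<subseteq> V" using sub unfolding srcs_def by auto
  show s2: "snks A \<subseteq> V" using sub unfolding snks_def by auto
  show s3: "trs A \<subseteq> V" using sub unfolding trs_def transit_def by auto
  have f1: "finite (srcs A)" "finite (snks A)" "finite (trs A)"
    using finite_subset[OF s1 finV] finite_subset[OF s2 finV] finite_subset[OF s3 finV] by auto
  have d1: "srcs A \<inter> snks A = {}" unfolding srcs_def snks_def by auto
  have d2: "(srcs A \<union> snks A) \<inter> trs A = {}" unfolding srcs_def snks_def trs_def transit_def by auto
  have "card (srcs A \<union> snks A \<union> trs A) = card (srcs A) + card (snks A) + card (trs A)"
    using f1 d1 d2 by (simp add: card_Un_disjoint)
  moreover have "card (srcs A \<union> snks A \<union> trs A) \<le> card V"
    by (rule card_mono) (use finV s1 s2 s3 in auto)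
  ultimately show "card (srcs A) + card (snks A) + card (trs A) \<le> card V" by simp
qed

lemma t0: assumes "trs A = {}" shows "A \<subseteq> srcs A \<times> snks A"
proof
  fix e assume e: "e \<in> A"
  obtain a b where ab: "e = (a,b)" by (cases e)
  have "\<not> transit A a" "\<not> transit A b" using assms unfolding trs_def by auto
  then have "a \<in> srcs A" "b \<in> snks A" using e ab unfolding transit_def srcs_def snks_def by auto
  then show "e \<in> srcs A \<times> snks A" using ab by simp
qed

lemma tpos:
  assumes sd: "strict_digraph V A" and asy: "asymmetric A" and ne: "trs A \<noteq> {}"
  shows "3 \<le> card V"
proof -
  have finV: "finite V" and sub: "A \<subseteq> V \<times> V" and noloop: "\<forall>v. (v,v)\<notin>A"
    using sd unfolding strict_digraph_def digraph_def by auto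
  obtain v where "transit A v" using ne unfolding trs_def by auto
  then obtain x y where xv: "(x,v)\<in>A" and vy: "(v,y)\<in>A" unfolding transit_def by blast
  have d: "x \<noteq> v" "v \<noteq> y" "x \<noteq> y" using xv vy noloop asy unfolding asymmetric_def by auto
  have "card {x,v,y} \<le> card V" by (rule card_mono) (use finV sub xv vy in auto)
  then show ?thesis using d by simp
qed

lemma small:
  assumes sd: "strict_digraph V A" and "card V \<le> 1"
  shows "A = {}"
proof (rule ccontr)
  have finV: "finite V" and sub: "A \<subseteq> V \<times> V" and noloop: "\<forall>v. (v,v)\<notin>A"
    using sd unfolding strict_digraph_def digraph_def by auto
  assume "A \<noteq> {}"
  then obtain a b where ab: "(a,b) \<in> A" by auto
  have "a \<noteq> b" using ab noloop by auto
  moreover have "card {a,b} \<le> card V" by (rule card_mono) (use finV sub ab in auto)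
  ultimately show False using assms(2) by simp
qed

lemma three_case:
  assumes sd: "strict_digraph V A" and c: "card (srcs A) = 1" "card (snks A) = 1" "card (trs A) = 1"
    and n: "card V = 3" and ne: "A \<inter> (srcs A \<times> snks A) \<noteq> {}"
  obtains u v w where "u\<noteq>v" "v\<noteq>w" "u\<noteq>w" "V = {u,v,w}" "A = {(u,v),(v,w),(u,w)}"
proof -
  have finV: "finite V" and sub: "A \<subseteq> V \<times> V" and noloop: "\<forall>v. (v,v)\<notin>A"
    using sd unfolding strict_digraph_def digraph_def by auto
  obtain u where u: "srcs A = {u}" using c(1) card_1_singletonE by blast
  obtain w where w: "snks A = {w}" using c(2) card_1_singletonE by blast
  obtain v where v: "trs A = {v}" using c(3) card_1_singletonE by blast
  have us: "u \<in> srcs A" and ws: "w \<in> snks A" and vt: "transit A v" using u w v unfolding trs_def by auto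
  have d: "u \<noteq> v" "v \<noteq> w" "u \<noteq> w" using us ws vt unfolding srcs_def snks_def transit_def by auto
  have "{u,v,w} \<subseteq> V" using parts[OF sd] u v w by auto
  moreover have "card {u,v,w} = card V" using d n by simp
  ultimately have V: "V = {u,v,w}" using finV card_subset_eq by metis
  have uw: "(u,w) \<in> A" using ne u w by auto
  have nin: "\<And>x. (x,u) \<notin> A" using us unfolding srcs_def by auto
  have nout: "\<And>y. (w,y) \<notin> A" using ws unfolding snks_def by auto
  obtain x y where xv: "(x,v)\<in>A" and vy: "(v,y)\<in>A" using vt unfolding transit_def by blast
  have "x \<in> V" "y \<in> V" using xv vy sub by auto
  then have "x = u" "y = w" using xv vy noloop nin nout V by auto
  then have uv: "(u,v) \<in> A" and vw: "(v,w) \<in> A" using xv vy by auto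
  have "A \<subseteq> {(u,v),(v,w),(u,w)}"
  proof
    fix e assume e: "e \<in> A"
    obtain a b where ab: "e = (a,b)" by (cases e)
    have "a \<in> V" "b \<in> V" "a \<noteq> b" "a \<noteq> w" "b \<noteq> u" using e ab sub noloop nin nout by auto
    then show "e \<in> {(u,v),(v,w),(u,w)}" using ab V by auto
  qed
  then have "A = {(u,v),(v,w),(u,w)}" using uv vw uw by auto
  then show thesis using that[OF d V] by simp
qed

lemma tt_of:
  assumes d: "u\<noteq>v" "v\<noteq>w" "u\<noteq>w" and V: "V = {u,v,w}" and A: "A = {(u,v),(v,w),(u,w)}"
  shows "transitive_tournament V A"
proof -
  define r where "r = (\<lambda>x. if x = u then 0 else if x = v then 1 else (2::nat))"
  have "A \<subseteq> inv_image less_than r" using d A unfolding r_def by auto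
  then have "wf A" using wf_subset wf_inv_image wf_less_than by blast
  then have "acyclic A" by (rule wf_acyclic)
  moreover have "tournament V A" using d unfolding tournament_def digraph_def V A by auto
  ultimately show ?thesis unfolding transitive_tournament_def by simp
qed

lemma tt_to:
  assumes tt: "transitive_tournament V A" and n: "card V = 3"
  obtains u v w where "u\<noteq>v" "v\<noteq>w" "u\<noteq>w" "V = {u,v,w}" "A = {(u,v),(v,w),(u,w)}"
proof -
  note obt = that
  have "\<exists>x y z. V = {x,y,z} \<and> x \<noteq> y \<and> y \<noteq> z \<and> x \<noteq> z" using n by (simp only: card_3_iff)
  then obtain a b c where h3: "V = {a,b,c} \<and> a \<noteq> b \<and> b \<noteq> c \<and> a \<noteq> c"
    by (elim exE) (erule that)
  have V: "V = {a,b,c}" using h3 by (rule conjunct1)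
  have d1: "a \<noteq> b \<and> b \<noteq> c \<and> a \<noteq> c" using h3 by (rule conjunct2)
  have d: "a \<noteq> b" "b \<noteq> c" "a \<noteq> c" using d1 by simp_all
  have tt1: "tournament V A" and ac: "acyclic A" using tt unfolding transitive_tournament_def by simp_all
  have sub: "A \<subseteq> V \<times> V" using tt1 unfolding tournament_def digraph_def by blast
  have noloop: "\<forall>v. (v,v)\<notin>A" using tt1 unfolding tournament_def by blast
  have tor: "\<forall>x\<in>V. \<forall>y\<in>V. x \<noteq> y \<longrightarrow> ((x,y) \<in> A \<longleftrightarrow> (y,x) \<notin> A)"
    using tt1 unfolding tournament_def by blast
  have cyc: "False" if "(x,y) \<in> A" "(y,z) \<in> A" "(z,x) \<in> A" for x y z
  proof -
    have "(x,x) \<in> A\<^sup>+" using that by (meson trancl.r_into_trancl trancl_into_trancl)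
    then show False using ac unfolding acyclic_def by blast
  qed
  have aV: "a \<in> V" "b \<in> V" "c \<in> V" using V by auto
  have ab: "(a,b) \<in> A \<longleftrightarrow> (b,a) \<notin> A" using tor aV d by blast
  have bc: "(b,c) \<in> A \<longleftrightarrow> (c,b) \<notin> A" using tor aV d by blast
  have ac': "(a,c) \<in> A \<longleftrightarrow> (c,a) \<notin> A" using tor aV d by blast
  have gen: "thesis" if w: "u\<noteq>v" "v\<noteq>w" "u\<noteq>w" "V = {u,v,w}" "(u,v)\<in>A" "(v,w)\<in>A" "(u,w)\<in>A" for u v w
  proof -
    have uV: "u \<in> V" "v \<in> V" "w \<in> V" using w(4) by auto
    have i1: "(u,v) \<in> A \<longleftrightarrow> (v,u) \<notin> A" using tor uV w(1) by blast
    have i2: "(v,w) \<in> A \<longleftrightarrow> (w,v) \<notin> A" using tor uV w(2) by blast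
    have i3: "(u,w) \<in> A \<longleftrightarrow> (w,u) \<notin> A" using tor uV w(3) by blast
    have n1: "(v,u) \<notin> A" "(w,v) \<notin> A" "(w,u) \<notin> A" using i1 i2 i3 w(5-7) by auto
    have "A \<subseteq> {(u,v),(v,w),(u,w)}"
    proof
      fix e assume e: "e \<in> A"
      obtain x y where xy: "e = (x,y)" by (cases e)
      have xV: "x \<in> {u,v,w}" "y \<in> {u,v,w}" "x \<noteq> y" using e xy sub noloop w(4) by auto
      have exy: "(x,y) \<in> A" using e xy by simp
      show "e \<in> {(u,v),(v,w),(u,w)}" using xV exy n1 xy by auto
    qed
    then have "A = {(u,v),(v,w),(u,w)}" using w by auto
    then show thesis using obt[OF w(1-4)] by simp
  qed
  show thesis
  proof (cases "(a,b) \<in> A")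
    case T1: True
    show ?thesis
    proof (cases "(b,c) \<in> A")
      case T2: True
      have "(a,c) \<in> A" using cyc[of a b c] T1 T2 ac' by blast
      then show ?thesis using T1 T2 d V by (intro gen[of a b c]) auto
    next
      case F2: False
      then have cb: "(c,b)\<in>A" using bc by simp
      show ?thesis
      proof (cases "(a,c)\<in>A")
        case True then show ?thesis using T1 cb d V by (intro gen[of a c b]) auto
      next
        case False then have "(c,a)\<in>A" using ac' by simp
        then show ?thesis using T1 cb d V by (intro gen[of c a b]) auto
      qed
    qed
  next
    case F1: False then have ba: "(b,a)\<in>A" using ab by simp
    show ?thesis
    proof (cases "(b,c)\<in>A")
      case T2: True
      show ?thesis
      proof (cases "(a,c)\<in>A")
        case True then show ?thesis using ba T2 d V by (intro gen[of b a c]) auto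
      next
        case False then have "(c,a)\<in>A" using ac' by simp
        then show ?thesis using ba T2 d V by (intro gen[of b c a]) auto
      qed
    next
      case F2: False then have cb: "(c,b)\<in>A" using bc by simp
      have "(c,a)\<in>A" using cyc[of a c b] cb ba ac' by blast
      then show ?thesis using ba cb d V by (intro gen[of c b a]) auto
    qed
  qed
qed

lemma L1:
  assumes d: "u\<noteq>v" "v\<noteq>w" "u\<noteq>w"
  shows "(e,f) \<in> line_adj {(u,v),(v,w),(u,w)} \<longleftrightarrow> (e = (u,v) \<and> f = (v,w)) \<or> (e = (v,w) \<and> f = (u,v))"
proof
  assume h: "(e,f) \<in> line_adj {(u,v),(v,w),(u,w)}"
  then have e: "e = (u,v) \<or> e = (v,w) \<or> e = (u,w)" and f: "f = (u,v) \<or> f = (v,w) \<or> f = (u,w)"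
    and ef: "e \<noteq> f" "snd e = fst f \<or> snd f = fst e" unfolding line_adj_def by auto
  from e f ef d show "(e = (u,v) \<and> f = (v,w)) \<or> (e = (v,w) \<and> f = (u,v))"
    by (elim disjE) simp_all
next
  assume "(e = (u,v) \<and> f = (v,w)) \<or> (e = (v,w) \<and> f = (u,v))"
  then show "(e,f) \<in> line_adj {(u,v),(v,w),(u,w)}" using d unfolding line_adj_def by auto
qed

lemma comp3:
  assumes d: "u\<noteq>v" "v\<noteq>w" "u\<noteq>w" and A: "A = {(u,v),(v,w),(u,w)}"
  shows "num_components_line A = 2"
proof -
  let ?B = "{(u,v),(v,w),(u,w)}"
  note L = L1[OF d]
  have c1: "x \<in> {(u,v),(v,w)}" if "((u,v),x) \<in> RS ?B" for x
    using that
  proof (induct rule: rtrancl_induct)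
    case base then show ?case by simp
  next
    case (step y z) then show ?case using L by blast
  qed
  have c2: "x \<in> {(u,v),(v,w)}" if "((v,w),x) \<in> RS ?B" for x
    using that
  proof (induct rule: rtrancl_induct)
    case base then show ?case by simp
  next
    case (step y z) then show ?case using L by blast
  qed
  have c3: "x = (u,w)" if "((u,w),x) \<in> RS ?B" for x
    using that
  proof (induct rule: rtrancl_induct)
    case base then show ?case by simp
  next
    case (step y z) then show ?case using L d by auto
  qed
  have r1: "((u,v),(v,w)) \<in> RS ?B" using L by blast
  have r2: "((v,w),(u,v)) \<in> RS ?B" using L by blast
  have e1: "RS ?B``{(u,v)} = {(u,v),(v,w)}" using c1 r1 by blast
  have e2: "RS ?B``{(v,w)} = {(u,v),(v,w)}" using c2 r2 by blast
  have e3: "RS ?B``{(u,w)} = {(u,w)}" using c3 by blast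
  have "?B // RS ?B = {{(u,v),(v,w)}, {(u,w)}}" unfolding quot_img using e1 e2 e3 by (simp add: insert_commute)
  moreover have "{(u,v),(v,w)} \<noteq> {(u,w)}" using d by auto
  ultimately show ?thesis unfolding num_components_line_def A by simp
qed

lemma bip:
  assumes "finite X" "finite Y" "X \<inter> Y = {}"
  shows "num_components_line {(x, y). x \<in> X \<and> y \<in> Y} = card X * card Y"
proof -
  let ?A = "{(x, y). x \<in> X \<and> y \<in> Y}"
  have "line_adj ?A = {}" using assms(3) unfolding line_adj_def by auto
  then have "RS ?A = Id" by simp
  then have "?A // RS ?A = (\<lambda>a. {a}) ` ?A" unfolding quot_img by simp
  moreover have "card ((\<lambda>a. {a}) ` ?A) = card ?A" by (rule card_image) auto
  moreover have "?A = X \<times> Y" by auto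
  ultimately show ?thesis unfolding num_components_line_def by (simp add: card_cartesian_product)
qed


theorem theorem2p4:
  fixes V :: "'a set" and A :: "('a \<times> 'a) set"
  assumes "strict_digraph V A" and "asymmetric A"
  shows "num_components_line A \<le> f_bound (card V) \<and>
         (num_components_line A = f_bound (card V) \<longleftrightarrow>
           ((card V = 3 \<and> transitive_tournament V A) \<or>
            (\<exists>X Y. X \<union> Y = V \<and> X \<inter> Y = {} \<and>
                   (card X \<le> card Y + 1 \<and> card Y \<le> card X + 1) \<and>
                   A = {(x, y). x \<in> X \<and> y \<in> Y})))"
proof -
  note sd = assms(1) and asy = assms(2)
  have finV: "finite V" and sub: "A \<subseteq> V \<times> V" and noloop: "\<forall>v. (v,v)\<notin>A"
    using sd unfolding strict_digraph_def digraph_def by auto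
  define n where "n = card V"
  define p where "p = card (srcs A)"
  define q where "q = card (snks A)"
  define t where "t = card (trs A)"
  define c where "c = num_components_line A"
  define f where "f = f_bound n"
  define RHS where "RHS = ((card V = 3 \<and> transitive_tournament V A) \<or>
            (\<exists>X Y. X \<union> Y = V \<and> X \<inter> Y = {} \<and>
                   (card X \<le> card Y + 1 \<and> card Y \<le> card X + 1) \<and>
                   A = {(x, y). x \<in> X \<and> y \<in> Y}))"
  have pqt: "p+q+t \<le> n" using parts(4)[OF sd] unfolding p_def q_def t_def n_def .
  have finS: "finite (srcs A)" "finite (snks A)"
    using parts(1,2)[OF sd] finV finite_subset by blast+
  have cb: "c \<le> card (A \<inter> (srcs A \<times> snks A)) + t"
    using count_bound(1)[OF sd] unfolding c_def t_def .
  have cPQ: "card (A \<inter> (srcs A \<times> snks A)) \<le> p*q"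
  proof -
    have "card (A \<inter> (srcs A \<times> snks A)) \<le> card (srcs A \<times> snks A)"
      by (rule card_mono) (use finS in auto)
    then show ?thesis unfolding p_def q_def by (simp add: card_cartesian_product)
  qed
  have F: "4*f \<le> n^2" "n^2 \<le> 4*f+1" unfolding f_def using fb by auto
  have main: "c \<le> f \<and> (c = f \<longrightarrow> RHS)"
  proof (cases "t = 0")
    case True
    then have tr0: "trs A = {}" unfolding t_def using parts(3)[OF sd] finV
      by (meson card_0_eq finite_subset)
    have AS: "A \<subseteq> srcs A \<times> snks A" by (rule t0[OF tr0])
    then have AI: "A \<inter> (srcs A \<times> snks A) = A" by auto
    have s4: "4*p*q \<le> n^2"
    proof -
      have "(p+q)^2 \<le> n^2" by (rule power_mono) (use pqt in simp_all)
      then show ?thesis using ar_sq[of p q] by linarith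
    qed
    have cA: "c \<le> card A" using cb True AI by simp
    have Apq: "card A \<le> p*q" using cPQ AI by simp
    have "c \<le> f" using cA Apq s4 F by linarith
    moreover have "c = f \<longrightarrow> RHS"
    proof
      assume cf: "c = f"
      have "n^2 \<le> 4*p*q + 1" using cf cA Apq F by linarith
      then have ar: "(p+q = n \<and> p \<le> q+1 \<and> q \<le> p+1) \<or> n \<le> 1" using ar_t0 pqt by simp
      have "card A = p*q" using cf cA Apq s4 F by linarith
      then have Aeq: "A = srcs A \<times> snks A"
        using AS finS card_subset_eq[of "srcs A \<times> snks A" A] unfolding p_def q_def
        by (simp add: card_cartesian_product)
      from ar show RHS
      proof
        assume h: "p+q = n \<and> p \<le> q+1 \<and> q \<le> p+1"
        have dj: "srcs A \<inter> snks A = {}" unfolding srcs_def snks_def by auto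
        have "card (srcs A \<union> snks A) = n" using h finS dj unfolding p_def q_def
          by (simp add: card_Un_disjoint)
        moreover have "srcs A \<union> snks A \<subseteq> V" using parts(1,2)[OF sd] by auto
        ultimately have "srcs A \<union> snks A = V" using finV card_subset_eq unfolding n_def by metis
        moreover have "A = {(x, y). x \<in> srcs A \<and> y \<in> snks A}" using Aeq by auto
        ultimately show RHS unfolding RHS_def using dj h unfolding p_def q_def by blast
      next
        assume "n \<le> 1"
        then have "A = {}" using small[OF sd] unfolding n_def by simp
        then have "V \<union> {} = V \<and> V \<inter> {} = {} \<and> (card V \<le> card ({}::'a set) + 1 \<and> card ({}::'a set) \<le> card V + 1)
             \<and> A = {(x, y). x \<in> V \<and> y \<in> {}}" using \<open>n \<le> 1\<close> unfolding n_def by simp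
        then show RHS unfolding RHS_def by blast
      qed
    qed
    ultimately show ?thesis by simp
  next
    case False
    then have tne: "trs A \<noteq> {}" unfolding t_def by auto
    have n3: "3 \<le> n" using tpos[OF sd asy tne] unfolding n_def .
    show ?thesis
    proof (cases "p = 0 \<or> q = 0")
      case True
      then have "srcs A = {} \<or> snks A = {}" using finS unfolding p_def q_def by auto
      then have "2*c \<le> t" using count_bound(2)[OF sd] unfolding c_def t_def by simp
      then have "4*c + 3 \<le> n^2" using ar_deg pqt n3 by simp
      then have "c < f" using F by linarith
      then show ?thesis by simp
    next
      case False
      have c': "c \<le> p*q + t" using cb cPQ by linarith
      have p1: "p \<ge> 1" "q \<ge> 1" "t \<ge> 1" using False \<open>t \<noteq> 0\<close> by auto
      have "4*c+1 \<le> n^2" using ar_mix(1)[OF p1 pqt c'] .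
      then have "c \<le> f" using F by linarith
      moreover have "c = f \<longrightarrow> RHS"
      proof
        assume cf: "c = f"
        then have "n^2 \<le> 4*c+1" using F by simp
        then have h: "n=3 \<and> t=1 \<and> p=1 \<and> q=1" using ar_mix(2)[OF p1 pqt c'] by simp
        then have "f = 2" unfolding f_def f_bound_def by simp
        then have "card (A \<inter> (srcs A \<times> snks A)) \<ge> 1" using cf cb h by simp
        then have ne: "A \<inter> (srcs A \<times> snks A) \<noteq> {}" by auto
        have hh: "card (srcs A) = 1" "card (snks A) = 1" "card (trs A) = 1" "card V = 3"
          using h unfolding p_def q_def t_def n_def by auto
        obtain u v w where uvw: "u\<noteq>v" "v\<noteq>w" "u\<noteq>w" "V = {u,v,w}" "A = {(u,v),(v,w),(u,w)}"
          by (rule three_case[OF sd hh ne])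
        have "transitive_tournament V A" using tt_of[OF uvw] .
        then show RHS unfolding RHS_def using h n_def by simp
      qed
      ultimately show ?thesis by simp
    qed
  qed
  have bk: "RHS \<longrightarrow> c = f"
  proof
    assume RHS
    then show "c = f" unfolding RHS_def
    proof
      assume h: "card V = 3 \<and> transitive_tournament V A"
      obtain u v w where uvw: "u\<noteq>v" "v\<noteq>w" "u\<noteq>w" "V = {u,v,w}" "A = {(u,v),(v,w),(u,w)}"
        using tt_to[of V A] h by blast
      have "c = 2" using comp3[OF uvw(1-3) uvw(5)] unfolding c_def .
      moreover have "f = 2" using h unfolding f_def n_def f_bound_def by simp
      ultimately show "c = f" by simp
    next
      assume "\<exists>X Y. X \<union> Y = V \<and> X \<inter> Y = {} \<and>
                   (card X \<le> card Y + 1 \<and> card Y \<le> card X + 1) \<and>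
                   A = {(x, y). x \<in> X \<and> y \<in> Y}"
      then obtain X Y where XY: "X \<union> Y = V" "X \<inter> Y = {}" "card X \<le> card Y + 1" "card Y \<le> card X + 1"
        "A = {(x, y). x \<in> X \<and> y \<in> Y}" by blast
      have fin: "finite X" "finite Y" using XY(1) finV by auto
      have "c = card X * card Y" using bip[OF fin XY(2)] XY(5) unfolding c_def by simp
      also have "\<dots> = f_bound (card X + card Y)" using bip_arith XY(3,4) by simp
      also have "card X + card Y = n"
      proof -
        have "card (X \<union> Y) = card X + card Y" by (rule card_Un_disjoint) (use fin XY(2) in auto)
        then show ?thesis using XY(1) unfolding n_def by simp
      qed
      finally show "c = f" unfolding f_def .
    qed
  qed
  show ?thesis using main bk unfolding c_def f_def n_def RHS_def by blast
qed


end
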